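(* Let $W \in \mathbb{R}^{m \times n}$ have a directed spanning set of $\mathbb{R}^n$ with respect to every $x \in \mathbb{R}^n$. Then there exists $C(W) > 0$ such that for all $x_0, x_1 \in \mathbb{R}^n$, $$\|\operatorname{ReLU}(Wx_0) - \operatorname{ReLU}(Wx_1)\|_2 \geq C(W)\, \|x_0 - x_1\|_2,$$ where one may take $C(W) = \frac{1}{\sqrt{2m}} \min_{x \in \mathbb{R}^n} \sigma\big(W|_{S(x,W)}\big)$.
   Context: $\operatorname{ReLU}(y)=\max(y,0)$ componentwise. For $W$ with rows $w_1,\dots,w_m$ and $x\in\mathbb{R}^n$, $S(x,W) = \{ j \in \{1,\dots,m\} : \langle w_j, x\rangle \geq 0\}$; for an index set $\mathcal{I}$, $W|_{\mathcal{I}}$ is the $m\times n$ matrix whose $j$-th row equals $w_j$ if $j\in\mathcal{I}$ and is zero otherwise. $\sigma(M)$ denotes the smallest singular value of $M$ (i.e. $\min_{\|x\|_2=1}\|Mx\|_2$). $W$ has a directed spanning set of $\mathbb{R}^n$ w.r.t. $x$ if the rows $\{w_j : j \in S(x,W)\}$ span $\mathbb{R}^n$. *)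

theory Defs
  imports "HOL-Analysis.Analysis"
begin

definition relu :: "real ^ 'm \<Rightarrow> real ^ 'm" where
  "relu y = (\<chi> j. max (y $ j) 0)"

definition active_set :: "real ^ 'n \<Rightarrow> real ^ 'n ^ 'm \<Rightarrow> 'm set" where
  "active_set x W = {j. W $ j \<bullet> x \<ge> 0}"

definition restrict_rows :: "real ^ 'n ^ 'm \<Rightarrow> 'm set \<Rightarrow> real ^ 'n ^ 'm" where
  "restrict_rows W I = (\<chi> j. if j \<in> I then W $ j else 0)"

definition smallest_sv :: "real ^ 'n ^ 'm \<Rightarrow> real" where
  "smallest_sv M = Inf {norm (M *v x) | x. norm x = 1}"

definition directed_spanning :: "real ^ 'n ^ 'm \<Rightarrow> real ^ 'n \<Rightarrow> bool" where
  "directed_spanning W x \<longleftrightarrow> span {W $ j | j. j \<in> active_set x W} = UNIV"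

end

theory Submission
  imports Defs
begin

lemma mv_nth: "((M::real^'n^'m) *v x) $ j = M $ j \<bullet> x"
  by (simp add: matrix_vector_mult_def inner_vec_def mult.commute)

lemma sv_lower:
  fixes M :: "real ^ 'n ^ 'm"
  shows "smallest_sv M * norm d \<le> norm (M *v d)"
proof (cases "d = 0")
  case True then show ?thesis by simp
next
  case False
  define u where "u = (1 / norm d) *\<^sub>R d"
  have nu: "norm u = 1" using False by (simp add: u_def)
  have bdd: "bdd_below {norm (M *v x) | x. norm x = 1}"
    by (rule bdd_belowI[of _ 0]) auto
  have "smallest_sv M \<le> norm (M *v u)"
    unfolding smallest_sv_def by (rule cInf_lower[OF _ bdd]) (use nu in auto)
  also have "M *v u = (1 / norm d) *\<^sub>R (M *v d)"
    by (simp add: u_def matrix_vector_mult_scaleR)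
  finally have "smallest_sv M \<le> norm (M *v d) / norm d" using False by simp
  then show ?thesis using False by (simp add: pos_le_divide_eq)
qed

lemma sv_pos:
  fixes W :: "real ^ 'n ^ 'm"
  assumes sp: "span {W $ j | j. j \<in> S} = UNIV"
  shows "smallest_sv (restrict_rows W S) > 0"
proof -
  define R where "R = restrict_rows W S"
  have lin: "linear ((*v) R)" by simp
  have inj: "inj ((*v) R)"
    unfolding linear_inj_iff_eq_0[OF lin]
  proof (intro allI impI)
    fix d assume z: "R *v d = 0"
    have o: "orthogonal d y" if "y \<in> {W $ j | j. j \<in> S}" for y
    proof -
      from that obtain j where j: "j \<in> S" "y = W $ j" by blast
      have "(R *v d) $ j = 0" using z by simp
      then have "W $ j \<bullet> d = 0" using j by (simp add: mv_nth R_def restrict_rows_def)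
      then show ?thesis using j by (simp add: orthogonal_def inner_commute)
    qed
    have "d \<in> span {W $ j | j. j \<in> S}" using sp by simp
    from orthogonal_to_span[OF this o] have "orthogonal d d" .
    then show "d = 0" by (simp add: orthogonal_def)
  qed
  obtain B where B: "B > 0" "\<And>x. B * norm x \<le> norm (R *v x)"
    using linear_inj_bounded_below_pos[OF lin inj] by blast
  have "B \<le> smallest_sv R"
    unfolding smallest_sv_def
  proof (rule cInf_greatest)
    show "{norm (R *v x) |x. norm x = 1} \<noteq> {}"
      using norm_axis_1[of undefined] by blast
    fix y assume "y \<in> {norm (R *v x) |x. norm x = 1}"
    then obtain x where "norm x = 1" "y = norm (R *v x)" by blast
    then show "B \<le> y" using B(2)[of x] by simp
  qed
  then show ?thesis using B(1) by (simp add: R_def)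
qed

theorem theorem3:
  fixes W :: "real ^ 'n ^ 'm"
  assumes "\<forall>x. directed_spanning W x"
  shows "let C = (1 / sqrt (2 * real CARD('m))) *
                 Min (range (\<lambda>x. smallest_sv (restrict_rows W (active_set x W))))
         in C > 0 \<and>
            (\<forall>x0 x1. norm (relu (W *v x0) - relu (W *v x1)) \<ge> C * norm (x0 - x1))"
proof -
  define f where "f = (\<lambda>x. smallest_sv (restrict_rows W (active_set x W)))"
  define Mn where "Mn = Min (range f)"
  have fin: "finite (range f)"
  proof (rule finite_subset)
    show "range f \<subseteq> (\<lambda>I. smallest_sv (restrict_rows W I)) ` UNIV" by (auto simp: f_def)
  qed simp
  have Mle: "Mn \<le> f x" for x unfolding Mn_def using fin by simp
  have "Mn \<in> range f" unfolding Mn_def using fin by (intro Min_in) auto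
  then obtain x' where "Mn = f x'" by blast
  moreover have "f x > 0" for x
    unfolding f_def using assms by (intro sv_pos) (simp add: directed_spanning_def)
  ultimately have Mpos: "Mn > 0" by simp
  have m2: "CARD('m) \<ge> 2"
  proof (rule ccontr)
    assume "\<not> ?thesis"
    moreover have "CARD('m) \<ge> 1" using card_gt_0_iff finite_UNIV by fastforce
    ultimately have "CARD('m) = 1" by linarith
    then obtain j0 :: 'm where U: "UNIV = {j0}" using card_1_singletonE by blast
    define x where "x = - (W $ j0)"
    have "{W $ j | j. j \<in> active_set x W} \<subseteq> {0}"
    proof
      fix y assume "y \<in> {W $ j | j. j \<in> active_set x W}"
      then obtain j where "j \<in> active_set x W" "y = W $ j" by blast
      moreover have "j = j0" using U by auto
      ultimately have "W $ j0 \<bullet> (- W $ j0) \<ge> 0" "y = W $ j0" by (auto simp: active_set_def x_def)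
      then have "W $ j0 \<bullet> W $ j0 \<le> 0" "y = W $ j0" by auto
      then have "W $ j0 \<bullet> W $ j0 = 0" "y = W $ j0" using inner_ge_zero[of "W $ j0"] by linarith+
      then show "y \<in> {0}" by simp
    qed
    then have "span {W $ j | j. j \<in> active_set x W} \<subseteq> span {0}"
      by (rule span_mono)
    then have sp0: "span {W $ j | j. j \<in> active_set x W} \<subseteq> {0}" by simp
    have "(axis undefined (1::real) :: real^'n) \<noteq> 0" by (simp add: axis_eq_0_iff)
    moreover have "(axis undefined (1::real) :: real^'n) \<in> span {W $ j | j. j \<in> active_set x W}"
      using assms unfolding directed_spanning_def by simp
    ultimately show False using sp0 by blast
  qed
  define C where "C = (1 / sqrt (2 * real CARD('m))) * Mn"
  have "sqrt 4 \<le> sqrt (2 * real CARD('m))" using m2 by (subst real_sqrt_le_iff) simp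
  then have sq: "2 \<le> sqrt (2 * real CARD('m))" by simp
  have Cpos: "C > 0" using Mpos sq by (simp add: C_def)
  have Cle: "C \<le> Mn / 2" unfolding C_def using Mpos sq
    by (simp add: field_simps)
  have main: "C * norm (x0 - x1) \<le> norm (relu (W *v x0) - relu (W *v x1))" for x0 x1
  proof -
    define d where "d = x0 - x1"
    define S where "S = active_set ((1/2) *\<^sub>R (x0 + x1)) W"
    define R where "R = restrict_rows W S"
    have comp: "norm (((1/2) *\<^sub>R (R *v d)) $ j) \<le> norm ((relu (W *v x0) - relu (W *v x1)) $ j)" for j
    proof (cases "j \<in> S")
      case True
      define a where "a = W $ j \<bullet> x0"
      define b where "b = W $ j \<bullet> x1"
      have ab: "a + b \<ge> 0" using True
        by (simp add: S_def active_set_def a_def b_def inner_add_right)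
      have "((1/2) *\<^sub>R (R *v d)) $ j = (a - b) / 2" using True
        by (simp add: mv_nth R_def restrict_rows_def d_def a_def b_def inner_diff_right)
      moreover have "(relu (W *v x0) - relu (W *v x1)) $ j = max a 0 - max b 0"
        by (simp add: relu_def mv_nth a_def b_def)
      moreover have "\<bar>(a - b) / 2\<bar> \<le> \<bar>max a 0 - max b 0\<bar>" using ab
      proof (cases "b \<le> 0")
        case True
        then have "a \<ge> 0" "max a 0 - max b 0 = a" using ab by auto
        then show ?thesis using ab True by (simp add: abs_if)
      next
        case False
        show ?thesis
        proof (cases "a \<le> 0")
          case True
          then have "max a 0 - max b 0 = - b" using False by auto
          moreover have "\<bar>(a - b) / 2\<bar> = (b - a) / 2" using True False by simp
          moreover have "(b - a) / 2 \<le> b" using ab by simp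
          ultimately show ?thesis using False by simp
        next
          case F2: False
          then have "max a 0 - max b 0 = a - b" using False by auto
          moreover have "\<bar>(a - b) / 2\<bar> = \<bar>a - b\<bar> / 2" by simp
          moreover have "\<bar>a - b\<bar> / 2 \<le> \<bar>a - b\<bar>" by simp
          ultimately show ?thesis by simp
        qed
      qed
      ultimately show ?thesis by simp
    next
      case False
      then show ?thesis by (simp add: mv_nth R_def restrict_rows_def)
    qed
    have "norm ((1/2) *\<^sub>R (R *v d)) \<le> norm (relu (W *v x0) - relu (W *v x1))"
      by (rule norm_le_componentwise_cart) (use comp in blast)
    then have h1: "norm (R *v d) / 2 \<le> norm (relu (W *v x0) - relu (W *v x1))" by simp
    have "smallest_sv R * norm d \<le> norm (R *v d)" by (rule sv_lower)
    moreover have "Mn \<le> smallest_sv R" using Mle unfolding f_def R_def S_def by blast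
    ultimately have "Mn * norm d \<le> norm (R *v d)"
      by (meson mult_right_mono norm_ge_zero order_trans)
    moreover have "C * norm d \<le> Mn / 2 * norm d" using Cle by (intro mult_right_mono) auto
    ultimately show ?thesis using h1 unfolding d_def by linarith
  qed
  show ?thesis unfolding Let_def using Cpos main by (simp add: C_def Mn_def f_def)
qed

end
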